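(* Let $s\in[n]$ with $s\le n-2$. Then \[ \langle1|^{\otimes d}\left(\mathrm{tr}_{n-d}|\psi_s\rangle\langle\psi_s|\right)|1\rangle^{\otimes d}\geq 1-O(ds/n), \] where $\mathrm{tr}_{n-d}$ denotes the partial trace over the last $n-d$ qubits and the $O$-notation refers to $n\to\infty$.
   Context: On $n$ qubits, let $\omega=e^{2\pi i/n}$, $\sigma_m^-=|0\rangle\langle1|$ on qubit $m$, $S_-=\sum_{m=1}^n\sigma_m^-$, $|\Psi\rangle=\overline{\omega}\sum_{m=1}^n\omega^m\sigma_m^-|1\rangle^{\otimes n}$, and for $s=0,\dots,n-2$, $|\psi_s\rangle=S_-^s|\Psi\rangle/\|S_-^s|\Psi\rangle\|$ (the normalized magnon states). *)

theory Defs
  imports Complex_Main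
begin

text \<open>States of n qubits: functions from computational basis strings (bool lists of
length n; True = |1>, False = |0>, position i = qubit i+1) to amplitudes.\<close>

type_synonym qstate = "bool list \<Rightarrow> complex"

definition basis :: "nat \<Rightarrow> bool list set" where
  "basis n = {xs. length xs = n}"

definition omega :: "nat \<Rightarrow> complex" where
  "omega n = cis (2 * pi / real n)"

text \<open>sigma_minus on qubit i (0-based) = |0><1|: the amplitude at x with x_i = 0 is
the old amplitude at x with x_i flipped to 1.\<close>
definition sigma_minus :: "nat \<Rightarrow> qstate \<Rightarrow> qstate" where
  "sigma_minus i \<psi> = (\<lambda>xs. if i < length xs \<and> \<not> xs ! i then \<psi> (xs[i := True]) else 0)"

definition S_minus :: "nat \<Rightarrow> qstate \<Rightarrow> qstate" where
  "S_minus n \<psi> = (\<lambda>xs. \<Sum>i<n. sigma_minus i \<psi> xs)"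

definition all_ones :: "nat \<Rightarrow> qstate" where
  "all_ones n = (\<lambda>xs. if xs = replicate n True then 1 else 0)"

text \<open>|Psi> = conj(omega) * sum_{m=1}^n omega^m sigma_m^- |1...1>  (m = i+1).\<close>
definition Psi :: "nat \<Rightarrow> qstate" where
  "Psi n = (\<lambda>xs. cnj (omega n) * (\<Sum>i<n. omega n ^ (i + 1) * sigma_minus i (all_ones n) xs))"

definition vnorm :: "nat \<Rightarrow> qstate \<Rightarrow> real" where
  "vnorm n \<psi> = sqrt (\<Sum>xs\<in>basis n. (cmod (\<psi> xs))\<^sup>2)"

definition magnon :: "nat \<Rightarrow> nat \<Rightarrow> qstate" where
  "magnon n s = (let v = (S_minus n ^^ s) (Psi n) in (\<lambda>xs. v xs / complex_of_real (vnorm n v)))"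

definition proj :: "qstate \<Rightarrow> (bool list \<Rightarrow> bool list \<Rightarrow> complex)" where
  "proj \<psi> = (\<lambda>a b. \<psi> a * cnj (\<psi> b))"

definition ptrace_last :: "nat \<Rightarrow> nat \<Rightarrow> (bool list \<Rightarrow> bool list \<Rightarrow> complex)
    \<Rightarrow> (bool list \<Rightarrow> bool list \<Rightarrow> complex)" where
  "ptrace_last n d \<rho> = (\<lambda>a b. \<Sum>y\<in>basis (n - d). \<rho> (a @ y) (b @ y))"

end

theory Submission
  imports Defs
begin

definition zs :: "bool list \<Rightarrow> nat set" where
  "zs xs = {i. i < length xs \<and> \<not> xs ! i}"

lemma zs_sub: "zs xs \<subseteq> {..<length xs}" by (auto simp: zs_def)
lemma finite_zs[simp]: "finite (zs xs)" by (rule finite_subset[OF zs_sub]) auto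

lemma zs_upd: "i < length xs \<Longrightarrow> zs (xs[i := True]) = zs xs - {i}"
  by (auto simp: zs_def nth_list_update)

lemma zs_inj: "length xs = length ys \<Longrightarrow> zs xs = zs ys \<Longrightarrow> xs = ys"
proof (rule nth_equalityI)
  fix i assume "length xs = length ys" "zs xs = zs ys" "i < length xs"
  then show "xs ! i = ys ! i" unfolding zs_def by (auto simp: set_eq_iff)
qed simp

lemma zs_bij: "bij_betw zs (basis n) (Pow {..<n})"
proof (rule bij_betwI')
  show "\<And>x y. x \<in> basis n \<Longrightarrow> y \<in> basis n \<Longrightarrow> (zs x = zs y) = (x = y)"
    using zs_inj by (auto simp: basis_def)
  show "\<And>x. x \<in> basis n \<Longrightarrow> zs x \<in> Pow {..<n}" using zs_sub by (auto simp: basis_def)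
  fix Z assume "Z \<in> Pow {..<n}"
  then have "zs (map (\<lambda>i. i \<notin> Z) [0..<n]) = Z" by (auto simp: zs_def)
  then show "\<exists>x\<in>basis n. Z = zs x" by (force simp: basis_def)
qed

lemma sum_basis: "(\<Sum>xs\<in>basis n. G (zs xs)) = (\<Sum>Z\<in>Pow {..<n}. G Z)"
  using sum.reindex_bij_betw[OF zs_bij, of G] by simp

definition Sw :: "nat \<Rightarrow> nat set \<Rightarrow> complex" where
  "Sw n Z = (\<Sum>j\<in>Z. omega n ^ j)"

lemma sigma_all_ones:
  "sigma_minus i (all_ones n) xs = (if length xs = n \<and> zs xs = {i} then 1 else 0)"
proof -
  have "(i < length xs \<and> \<not> xs ! i \<and> xs[i := True] = replicate n True) \<longleftrightarrow> (length xs = n \<and> zs xs = {i})"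
  proof
    assume a: "i < length xs \<and> \<not> xs ! i \<and> xs[i := True] = replicate n True"
    have "length (xs[i := True]) = n" by (subst conjunct2[OF conjunct2[OF a]]) simp
    then have l: "length xs = n" by simp
    have "xs ! j" if "j < n" "j \<noteq> i" for j
    proof -
      have "xs ! j = xs[i := True] ! j" using that by simp
      also have "\<dots> = True" using a that by simp
      finally show ?thesis by simp
    qed
    then have "zs xs = {i}" using a l unfolding zs_def by blast
    then show "length xs = n \<and> zs xs = {i}" using l by simp
  next
    assume a: "length xs = n \<and> zs xs = {i}"
    then have i: "i < length xs \<and> \<not> xs ! i" unfolding zs_def by blast
    have o: "xs ! j" if "j < n" "j \<noteq> i" for j
      using a that unfolding zs_def by blast
    have "xs[i := True] = replicate n True"
    proof (rule nth_equalityI)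
      show "length (xs[i := True]) = length (replicate n True)" using a by simp
      fix j assume "j < length (xs[i := True])"
      then show "xs[i := True] ! j = replicate n True ! j"
        using a o by (cases "j = i") (auto simp: nth_list_update)
    qed
    then show "i < length xs \<and> \<not> xs ! i \<and> xs[i := True] = replicate n True" using i by blast
  qed
  then show ?thesis by (auto simp: sigma_minus_def all_ones_def)
qed

lemma omega_norm[simp]: "norm (omega n) = 1" by (simp add: omega_def)

lemma cnj_omega_mult: "cnj (omega n) * omega n = 1"
  by (metis complex_norm_square mult.commute norm_one omega_norm of_real_1 power_one)

lemma amp: "(S_minus n ^^ s) (Psi n) xs =
   (if length xs = n \<and> card (zs xs) = s + 1 then of_nat (fact s) * Sw n (zs xs) else 0)"
proof (induction s arbitrary: xs)
  case 0
  show ?case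
  proof (cases "length xs = n \<and> card (zs xs) = 1")
    case True
    then obtain i0 where z: "zs xs = {i0}" by (auto simp: card_Suc_eq)
    then have "i0 < n" using zs_sub True by auto
    have "(\<Sum>i<n. omega n ^ (i + 1) * sigma_minus i (all_ones n) xs)
        = (\<Sum>i<n. if i = i0 then omega n ^ (i + 1) else 0)"
      using True z by (intro sum.cong) (auto simp: sigma_all_ones)
    also have "\<dots> = omega n ^ (i0 + 1)" using \<open>i0 < n\<close> by simp
    finally show ?thesis using True z cnj_omega_mult
      by (simp add: Psi_def Sw_def mult.assoc[symmetric])
  next
    case False
    have "(\<Sum>i<n. omega n ^ (i + 1) * sigma_minus i (all_ones n) xs) = 0"
      using False by (intro sum.neutral) (auto simp: sigma_all_ones)
    then show ?thesis using False by (auto simp: Psi_def)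
  qed
next
  case (Suc s)
  let ?w = "(S_minus n ^^ s) (Psi n)"
  have "(S_minus n ^^ Suc s) (Psi n) xs = (\<Sum>i<n. sigma_minus i ?w xs)"
    by (simp add: S_minus_def)
  show ?case
  proof (cases "length xs = n")
    case False
    have "(\<Sum>i<n. sigma_minus i ?w xs) = 0"
      using False by (intro sum.neutral) (auto simp: sigma_minus_def Suc.IH)
    then show ?thesis using False \<open>(S_minus n ^^ Suc s) (Psi n) xs = _\<close> by simp
  next
    case True
    define Z where "Z = zs xs"
    have ZS: "Z \<subseteq> {..<n}" using zs_sub True Z_def by auto
    have "(\<Sum>i<n. sigma_minus i ?w xs) = (\<Sum>i<n. if i \<in> Z then ?w (xs[i := True]) else 0)"
      using True by (intro sum.cong) (auto simp: sigma_minus_def Z_def zs_def)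
    also have "\<dots> = (\<Sum>i\<in>Z. ?w (xs[i := True]))"
      using ZS by (simp add: sum.If_cases Int_absorb1 Int_absorb2)
    also have "\<dots> = (\<Sum>i\<in>Z. if card Z = s + 2 then of_nat (fact s) * (Sw n Z - omega n ^ i) else 0)"
    proof (intro sum.cong refl)
      fix i assume i: "i \<in> Z"
      then have il: "i < length xs" using ZS True by auto
      have c: "card (Z - {i}) = card Z - 1" using i by simp
      have cz: "card Z \<ge> 1" using i card_gt_0_iff[of Z] by (auto simp: Z_def)
      have "Sw n (Z - {i}) = Sw n Z - omega n ^ i" unfolding Sw_def Z_def
        using i Z_def by (simp add: sum_diff1)
      show "?w (xs[i := True]) = (if card Z = s + 2 then of_nat (fact s) * (Sw n Z - omega n ^ i) else 0)"
      proof -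
        have "?w (xs[i:=True]) = (if length (xs[i:=True]) = n \<and> card (zs (xs[i:=True])) = s+1
           then of_nat (fact s) * Sw n (zs (xs[i:=True])) else 0)" by (rule Suc.IH)
        moreover have "zs (xs[i:=True]) = Z - {i}" using zs_upd[OF il] Z_def by simp
        moreover have "(card Z - 1 = s + 1) = (card Z = s + 2)" using cz by arith
        ultimately show ?thesis using True c \<open>Sw n (Z - {i}) = _\<close> by simp
      qed
    qed
    also have "\<dots> = (if card Z = s + 2 then of_nat (fact (Suc s)) * Sw n Z else 0)"
    proof (cases "card Z = s + 2")
      case True
      have "(\<Sum>i\<in>Z. of_nat (fact s) * (Sw n Z - omega n ^ i)) = of_nat (fact s) * (of_nat (card Z) * Sw n Z - Sw n Z)"
        unfolding sum_distrib_left[symmetric] by (simp add: sum_subtractf Sw_def)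
      also have "\<dots> = of_nat (fact (Suc s)) * Sw n Z" using True by (simp add: algebra_simps)
      finally show ?thesis using True by simp
    qed simp
    finally show ?thesis using True \<open>(S_minus n ^^ Suc s) (Psi n) xs = _\<close> Z_def by simp
  qed
qed


lemma omega_pow_n: "n > 0 \<Longrightarrow> omega n ^ n = 1"
  by (simp add: omega_def DeMoivre)

lemma omega_ne_1: assumes "n \<ge> 2" shows "omega n \<noteq> 1"
proof
  assume "omega n = 1"
  then have "cos (2 * pi / real n) = 1" unfolding omega_def
    by (metis cis.sel(1) one_complex.sel(1))
  then obtain m :: int where m: "2 * pi / real n = m * 2 * pi" by (auto simp: cos_one_2pi_int)
  then have "(2 * pi) * (1 / real n) = (2 * pi) * m" by (simp add: field_simps)
  then have "1 / real n = m" by (subst (asm) mult_cancel_left) simp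
  moreover have "0 < 1 / real n" "1 / real n < 1" using assms by auto
  ultimately show False by (metis of_int_0_less_iff of_int_less_1_iff not_less zero_less_one_class.zero_le_one int_one_le_iff_zero_less linorder_not_le)
qed

lemma Sw_all: "n \<ge> 2 \<Longrightarrow> Sw n {..<n} = 0"
  unfolding Sw_def using omega_ne_1 omega_pow_n by (simp add: geometric_sum)

lemma count_sup:
  assumes "finite A" "B \<subseteq> A"
  shows "card {Z. Z \<subseteq> A \<and> card Z = card B + m \<and> B \<subseteq> Z} = (card A - card B) choose m"
proof -
  have fB: "finite B" using assms finite_subset by blast
  have "bij_betw (\<lambda>Z. Z - B) {Z. Z \<subseteq> A \<and> card Z = card B + m \<and> B \<subseteq> Z} {W. W \<subseteq> A - B \<and> card W = m}"
  proof (rule bij_betw_byWitness[where f' = "\<lambda>W. W \<union> B"])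
    show "(\<lambda>Z. Z - B) ` {Z. Z \<subseteq> A \<and> card Z = card B + m \<and> B \<subseteq> Z} \<subseteq> {W. W \<subseteq> A - B \<and> card W = m}"
      using fB by (auto simp: card_Diff_subset)
    show "(\<lambda>W. W \<union> B) ` {W. W \<subseteq> A - B \<and> card W = m} \<subseteq> {Z. Z \<subseteq> A \<and> card Z = card B + m \<and> B \<subseteq> Z}"
    proof
      fix Z assume "Z \<in> (\<lambda>W. W \<union> B) ` {W. W \<subseteq> A - B \<and> card W = m}"
      then obtain W where "W \<subseteq> A - B" "card W = m" "Z = W \<union> B" by auto
      moreover have "finite W" using \<open>W \<subseteq> A - B\<close> assms finite_subset by blast
      moreover have "W \<inter> B = {}" using \<open>W \<subseteq> A - B\<close> by blast
      moreover have "card (W \<union> B) = card W + card B"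
        using card_Un_disjoint[OF \<open>finite W\<close> fB] calculation by simp
      ultimately show "Z \<in> {Z. Z \<subseteq> A \<and> card Z = card B + m \<and> B \<subseteq> Z}"
        using assms fB by auto
    qed
  qed auto
  then have "card {Z. Z \<subseteq> A \<and> card Z = card B + m \<and> B \<subseteq> Z} = card {W. W \<subseteq> A - B \<and> card W = m}"
    by (rule bij_betw_same_card)
  also have "\<dots> = card (A - B) choose m" using assms by (simp add: n_subsets)
  also have "card (A - B) = card A - card B" using assms fB by (simp add: card_Diff_subset)
  finally show ?thesis .
qed


lemma sum_restrict_sub: "finite A \<Longrightarrow> Z \<subseteq> A \<Longrightarrow> sum g Z = (\<Sum>j\<in>A. if j \<in> Z then g j else 0)"
  using sum.inter_restrict[of A g Z] by (simp add: Int_absorb1)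

lemma sum_if_card: "finite F \<Longrightarrow> (\<Sum>Z\<in>F. if P Z then c else 0) = of_nat (card {Z\<in>F. P Z}) * (c::complex)"
  by (simp add: sum.If_cases Int_def)

lemma card_pairs:
  assumes A: "finite A" "card A = k" "k \<ge> 2" "s \<ge> 1" and jl: "j \<in> A" "l \<in> A"
  shows "card {Z \<in> {Z. Z \<subseteq> A \<and> card Z = s + 1}. j \<in> Z \<and> l \<in> Z}
        = (k - 2 choose (s - 1)) + (if j = l then (k - 2 choose s) else 0)"
proof (cases "j = l")
  case True
  have "{Z \<in> {Z. Z \<subseteq> A \<and> card Z = s + 1}. j \<in> Z \<and> l \<in> Z} = {Z. Z \<subseteq> A \<and> card Z = card {j} + s \<and> {j} \<subseteq> Z}"
  proof -
    have "card {j} + s = s + 1" by simp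
    then show ?thesis using True by (simp only:) blast
  qed
  moreover have "card {Z. Z \<subseteq> A \<and> card Z = card {j} + s \<and> {j} \<subseteq> Z} = (card A - card {j}) choose s"
    by (rule count_sup) (use A jl in auto)
  moreover have "(k - 1) choose s = (k - 2 choose (s - 1)) + (k - 2 choose s)"
  proof -
    have e: "k - 1 = Suc (k - 2)" "Suc (s - 1) = s" using A by arith+
    have "Suc (k - 2) choose Suc (s - 1) = (k - 2 choose (s - 1)) + (k - 2 choose Suc (s - 1))"
      by (rule binomial_Suc_Suc)
    then show ?thesis unfolding e .
  qed
  ultimately show ?thesis using True A(2) by simp
next
  case False
  have S1: "{Z \<in> {Z. Z \<subseteq> A \<and> card Z = s + 1}. j \<in> Z \<and> l \<in> Z} = {Z. Z \<subseteq> A \<and> card Z = card {j, l} + (s - 1) \<and> {j, l} \<subseteq> Z}"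
  proof -
    have "card {j, l} + (s - 1) = s + 1" using False A by simp
    then show ?thesis by (simp only:) blast
  qed
  have S2: "card {Z. Z \<subseteq> A \<and> card Z = card {j, l} + (s - 1) \<and> {j, l} \<subseteq> Z} = (card A - card {j, l}) choose (s - 1)"
    by (rule count_sup) (use A jl in auto)
  have S3: "card {j, l} = 2" using False by simp
  have "card {Z \<in> {Z. Z \<subseteq> A \<and> card Z = s + 1}. j \<in> Z \<and> l \<in> Z} = card {Z. Z \<subseteq> A \<and> card Z = card {j, l} + (s - 1) \<and> {j, l} \<subseteq> Z}"
    using S1 by (rule arg_cong)
  also have "\<dots> = (card A - card {j, l}) choose (s - 1)" by (rule S2)
  also have "\<dots> = (k - 2) choose (s - 1)" using S3 A(2) by simp
  finally have cX: "card {Z \<in> {Z. Z \<subseteq> A \<and> card Z = s + 1}. j \<in> Z \<and> l \<in> Z} = (k - 2) choose (s - 1)" .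
  have z: "(if j = l then (k - 2 choose s) else 0) = 0" using False by simp
  show ?thesis unfolding z add_0_right by (rule cX)
qed

lemma F_formula:
  assumes A: "finite A" "card A = k" "k \<ge> 2" "s \<ge> 1"
  shows "(\<Sum>Z\<in>{Z. Z \<subseteq> A \<and> card Z = s + 1}. Sw n Z * cnj (Sw n Z))
    = of_nat (k - 2 choose (s - 1)) * (Sw n A * cnj (Sw n A)) + of_nat (k * (k - 2 choose s))"
proof -
  define w where "w j = omega n ^ j" for j
  define Fam where "Fam = {Z. Z \<subseteq> A \<and> card Z = s + 1}"
  have fF: "finite Fam" unfolding Fam_def by (rule finite_subset[where B="Pow A"]) (use A in auto)
  have e1: "Sw n Z * cnj (Sw n Z) = (\<Sum>j\<in>A. \<Sum>l\<in>A. if j \<in> Z \<and> l \<in> Z then w j * cnj (w l) else 0)"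
    if "Z \<in> Fam" for Z
  proof -
    have Z: "Z \<subseteq> A" using that Fam_def by auto
    have "Sw n Z * cnj (Sw n Z) = (\<Sum>j\<in>Z. \<Sum>l\<in>Z. w j * cnj (w l))"
      unfolding Sw_def w_def cnj_sum sum_product ..
    also have "\<dots> = (\<Sum>j\<in>A. if j \<in> Z then (\<Sum>l\<in>Z. w j * cnj (w l)) else 0)"
      by (rule sum_restrict_sub[OF A(1) Z])
    also have "\<dots> = (\<Sum>j\<in>A. \<Sum>l\<in>A. if j \<in> Z \<and> l \<in> Z then w j * cnj (w l) else 0)"
    proof (rule sum.cong[OF refl])
      fix j assume "j \<in> A"
      show "(if j \<in> Z then (\<Sum>l\<in>Z. w j * cnj (w l)) else 0) = (\<Sum>l\<in>A. if j \<in> Z \<and> l \<in> Z then w j * cnj (w l) else 0)"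
        using sum_restrict_sub[OF A(1) Z, of "\<lambda>l. w j * cnj (w l)"] by auto
    qed
    finally show ?thesis .
  qed
  have "(\<Sum>Z\<in>Fam. Sw n Z * cnj (Sw n Z)) = (\<Sum>Z\<in>Fam. \<Sum>j\<in>A. \<Sum>l\<in>A. if j \<in> Z \<and> l \<in> Z then w j * cnj (w l) else 0)"
    using e1 by (rule sum.cong[OF refl])
  also have "\<dots> = (\<Sum>j\<in>A. \<Sum>l\<in>A. \<Sum>Z\<in>Fam. if j \<in> Z \<and> l \<in> Z then w j * cnj (w l) else 0)"
    by (subst sum.swap) (subst sum.swap, rule refl)
  also have "\<dots> = (\<Sum>j\<in>A. \<Sum>l\<in>A. of_nat (k - 2 choose (s - 1)) * (w j * cnj (w l))
                    + (if j = l then of_nat (k - 2 choose s) * (w j * cnj (w l)) else 0))"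
  proof (intro sum.cong refl)
    fix j l assume "j \<in> A" "l \<in> A"
    show "(\<Sum>Z\<in>Fam. if j \<in> Z \<and> l \<in> Z then w j * cnj (w l) else 0) =
      of_nat (k - 2 choose (s - 1)) * (w j * cnj (w l)) + (if j = l then of_nat (k - 2 choose s) * (w j * cnj (w l)) else 0)"
    proof -
      have "(\<Sum>Z\<in>Fam. if j \<in> Z \<and> l \<in> Z then w j * cnj (w l) else 0)
          = of_nat (card {Z\<in>Fam. j \<in> Z \<and> l \<in> Z}) * (w j * cnj (w l))"
        by (rule sum_if_card[OF fF])
      also have "card {Z\<in>Fam. j \<in> Z \<and> l \<in> Z} = (k - 2 choose (s - 1)) + (if j = l then (k - 2 choose s) else 0)"
        unfolding Fam_def by (rule card_pairs[OF A \<open>j \<in> A\<close> \<open>l \<in> A\<close>])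
      finally show ?thesis by (cases "j = l") (simp_all add: algebra_simps)
    qed
  qed
  also have "\<dots> = of_nat (k - 2 choose (s - 1)) * (\<Sum>j\<in>A. \<Sum>l\<in>A. w j * cnj (w l))
                  + of_nat (k - 2 choose s) * (\<Sum>j\<in>A. w j * cnj (w j))"
    by (simp add: sum.distrib sum_distrib_left A(1))
  also have "(\<Sum>j\<in>A. \<Sum>l\<in>A. w j * cnj (w l)) = Sw n A * cnj (Sw n A)"
    unfolding Sw_def w_def cnj_sum sum_product ..
  also have "(\<Sum>j\<in>A. w j * cnj (w j)) = of_nat k"
  proof -
    have "w j * cnj (w j) = 1" for j
      unfolding w_def by (metis complex_norm_square norm_power omega_norm power_one of_real_1)
    then show ?thesis using A by simp
  qed
  finally show ?thesis unfolding Fam_def by (simp add: algebra_simps)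
qed


definition FF :: "nat \<Rightarrow> nat \<Rightarrow> nat set \<Rightarrow> real" where
  "FF n s A = (\<Sum>Z\<in>{Z. Z \<subseteq> A \<and> card Z = s + 1}. (cmod (Sw n Z))\<^sup>2)"

lemma FF_formula:
  assumes A: "finite A" "card A = k" "k \<ge> 2" "s \<ge> 1"
  shows "FF n s A = real (k - 2 choose (s - 1)) * (cmod (Sw n A))\<^sup>2 + real (k * (k - 2 choose s))"
proof -
  have "complex_of_real (FF n s A) = (\<Sum>Z\<in>{Z. Z \<subseteq> A \<and> card Z = s + 1}. Sw n Z * cnj (Sw n Z))"
    unfolding FF_def of_real_sum complex_norm_square ..
  also have "\<dots> = of_nat (k - 2 choose (s - 1)) * (Sw n A * cnj (Sw n A)) + of_nat (k * (k - 2 choose s))"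
    by (rule F_formula[OF A])
  also have "\<dots> = complex_of_real (real (k - 2 choose (s - 1)) * (cmod (Sw n A))\<^sup>2 + real (k * (k - 2 choose s)))"
    unfolding complex_norm_square[symmetric] by simp
  finally show ?thesis using of_real_eq_iff by blast
qed

lemma finite_basis: "finite (basis n)"
  using bij_betw_finite[OF zs_bij] by simp

lemma binom_tel:
  assumes "s \<ge> 1"
  shows "t \<le> M \<Longrightarrow> M choose s \<le> (M - t choose s) + t * (M - 1 choose (s - 1))"
proof (induction t)
  case 0 then show ?case by simp
next
  case (Suc t)
  have e: "M - t = Suc (M - Suc t)" "Suc (s - 1) = s" using Suc.prems assms by arith+
  have "M - t choose s = (M - Suc t choose (s - 1)) + (M - Suc t choose s)"
    using binomial_Suc_Suc[of "M - Suc t" "s - 1"] unfolding e .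
  moreover have "M - Suc t choose (s - 1) \<le> M - 1 choose (s - 1)"
    by (rule binomial_right_mono) simp
  moreover have "M choose s \<le> (M - t choose s) + t * (M - 1 choose (s - 1))"
    using Suc by simp
  ultimately show ?case by simp
qed

lemma binom_ratio:
  assumes "s \<ge> 1" "t \<le> M" "M > 0"
  shows "real (M - t choose s) \<ge> real (M choose s) * (1 - real t * real s / real M)"
proof -
  have "real (M choose s) \<le> real ((M - t choose s) + t * (M - 1 choose (s - 1)))"
    using binom_tel[OF assms(1,2)] by (simp only: of_nat_le_iff)
  then have "real (M choose s) \<le> real (M - t choose s) + real t * real (M - 1 choose (s - 1))"
    by simp
  moreover have "s * (M choose s) = M * (M - 1 choose (s - 1))"
    using times_binomial_minus1_eq[of s M] assms by simp
  then have "real (s * (M choose s)) = real (M * (M - 1 choose (s - 1)))" by (simp only:)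
  then have "real s * real (M choose s) = real M * real (M - 1 choose (s - 1))" by simp
  then have "real (M - 1 choose (s - 1)) = real s * real (M choose s) / real M"
    using assms by (simp add: field_simps)
  ultimately have a: "real (M choose s) \<le> real (M - t choose s) + real t * real (M - 1 choose (s - 1))"
     and b: "real (M - 1 choose (s - 1)) = real s * real (M choose s) / real M" by auto
  have "real (M choose s) * (1 - real t * real s / real M) = real (M choose s) - real t * real (M - 1 choose (s - 1))"
    unfolding b using assms by (simp add: field_simps)
  then show ?thesis using a by linarith
qed


lemma amp_norm:
  assumes "xs \<in> basis n"
  shows "(cmod ((S_minus n ^^ s) (Psi n) xs))\<^sup>2 =
    (if card (zs xs) = s + 1 then (fact s)\<^sup>2 * (cmod (Sw n (zs xs)))\<^sup>2 else 0)"
  using assms by (simp add: amp basis_def norm_mult power_mult_distrib)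

lemma sumG:
  assumes "A \<subseteq> {..<n}"
  shows "(\<Sum>Z\<in>Pow {..<n}. if Z \<subseteq> A then (if card Z = s + 1 then c * (cmod (Sw n Z))\<^sup>2 else 0) else 0)
        = c * FF n s A"
proof -
  have "(\<Sum>Z\<in>Pow {..<n}. if Z \<subseteq> A then (if card Z = s + 1 then c * (cmod (Sw n Z))\<^sup>2 else 0) else 0)
      = (\<Sum>Z\<in>{Z. Z \<subseteq> A \<and> card Z = s + 1}. c * (cmod (Sw n Z))\<^sup>2)"
    by (rule sum.mono_neutral_cong_right) (use assms in auto)
  also have "\<dots> = c * FF n s A" unfolding FF_def by (simp add: sum_distrib_left)
  finally show ?thesis .
qed

lemma sumG2:
  assumes "A \<subseteq> {..<n}"
  shows "(\<Sum>xs\<in>basis n. if zs xs \<subseteq> A then (if card (zs xs) = s + 1 then c * (cmod (Sw n (zs xs)))\<^sup>2 else 0) else 0)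
        = c * FF n s A"
  using sum_basis[of "\<lambda>Z. if Z \<subseteq> A then (if card Z = s + 1 then c * (cmod (Sw n Z))\<^sup>2 else 0) else 0" n]
    sumG[OF assms, of s c] by simp

lemma image_rep:
  assumes "d \<le> n"
  shows "(\<lambda>y. replicate d True @ y) ` basis (n - d) = {xs \<in> basis n. zs xs \<subseteq> {d..<n}}"
proof
  show "(\<lambda>y. replicate d True @ y) ` basis (n - d) \<subseteq> {xs \<in> basis n. zs xs \<subseteq> {d..<n}}"
  proof
    fix xs assume "xs \<in> (\<lambda>y. replicate d True @ y) ` basis (n - d)"
    then obtain y where y: "length y = n - d" "xs = replicate d True @ y" by (auto simp: basis_def)
    have l: "length xs = n" using y assms by simp
    have "i \<ge> d" if "i \<in> zs xs" for i
    proof (rule ccontr)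
      assume "\<not> d \<le> i"
      then have "xs ! i" using y by (simp add: nth_append)
      then show False using that by (simp add: zs_def)
    qed
    then show "xs \<in> {xs \<in> basis n. zs xs \<subseteq> {d..<n}}" using l zs_sub[of xs]
      by (auto simp: basis_def)
  qed
next
  show "{xs \<in> basis n. zs xs \<subseteq> {d..<n}} \<subseteq> (\<lambda>y. replicate d True @ y) ` basis (n - d)"
  proof
    fix xs assume a: "xs \<in> {xs \<in> basis n. zs xs \<subseteq> {d..<n}}"
    then have l: "length xs = n" and z: "zs xs \<subseteq> {d..<n}" by (auto simp: basis_def)
    have "take d xs = replicate d True"
    proof (rule nth_equalityI)
      show "length (take d xs) = length (replicate d True)" using l assms by simp
      fix i assume "i < length (take d xs)"
      then have i: "i < d" "i < length xs" by auto
      then have "i \<notin> zs xs" using z by auto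
      then have "xs ! i" using i by (simp add: zs_def)
      then show "take d xs ! i = replicate d True ! i" using i by simp
    qed
    then have "xs = replicate d True @ drop d xs" by (metis append_take_drop_id)
    moreover have "drop d xs \<in> basis (n - d)" using l by (simp add: basis_def)
    ultimately show "xs \<in> (\<lambda>y. replicate d True @ y) ` basis (n - d)" by blast
  qed
qed

lemma denom_sum:
  "(\<Sum>xs\<in>basis n. (cmod ((S_minus n ^^ s) (Psi n) xs))\<^sup>2) = (fact s)\<^sup>2 * FF n s {..<n}"
proof -
  have "(\<Sum>xs\<in>basis n. (cmod ((S_minus n ^^ s) (Psi n) xs))\<^sup>2)
     = (\<Sum>xs\<in>basis n. (\<lambda>Z. if Z \<subseteq> {..<n} then (if card Z = s + 1 then (fact s)\<^sup>2 * (cmod (Sw n Z))\<^sup>2 else 0) else 0) (zs xs))"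
    by (rule sum.cong[OF refl]) (use zs_sub in \<open>auto simp: amp_norm basis_def\<close>)
  also have "\<dots> = (fact s)\<^sup>2 * FF n s {..<n}"
    using sumG2[of "{..<n}" n s "(fact s)\<^sup>2"] by simp
  finally show ?thesis .
qed

lemma num_sum:
  assumes "d \<le> n"
  shows "(\<Sum>y\<in>basis (n - d). (cmod ((S_minus n ^^ s) (Psi n) (replicate d True @ y)))\<^sup>2)
     = (fact s)\<^sup>2 * FF n s {d..<n}"
proof -
  let ?v = "(S_minus n ^^ s) (Psi n)"
  have "(\<Sum>y\<in>basis (n - d). (cmod (?v (replicate d True @ y)))\<^sup>2)
      = (\<Sum>xs\<in>(\<lambda>y. replicate d True @ y) ` basis (n - d). (cmod (?v xs))\<^sup>2)"
    by (rule sum.reindex[symmetric, unfolded comp_def]) (simp add: inj_on_def)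
  also have "\<dots> = (\<Sum>xs\<in>{xs \<in> basis n. zs xs \<subseteq> {d..<n}}. (cmod (?v xs))\<^sup>2)"
    unfolding image_rep[OF assms] ..
  also have "\<dots> = (\<Sum>xs\<in>basis n. if zs xs \<subseteq> {d..<n} then (cmod (?v xs))\<^sup>2 else 0)"
    by (rule sum.inter_filter[OF finite_basis])
  also have "\<dots> = (\<Sum>xs\<in>basis n. (\<lambda>Z. if Z \<subseteq> {d..<n} then (if card Z = s + 1 then (fact s)\<^sup>2 * (cmod (Sw n Z))\<^sup>2 else 0) else 0) (zs xs))"
    by (rule sum.cong[OF refl]) (auto simp: amp_norm)
  also have "\<dots> = (fact s)\<^sup>2 * FF n s {d..<n}"
    by (rule sumG2) auto
  finally show ?thesis .
qed

lemma Re_proj: "Re (z / complex_of_real r * cnj (z / complex_of_real r)) = (cmod z)\<^sup>2 / r\<^sup>2"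
proof -
  have "z / complex_of_real r * cnj (z / complex_of_real r) = complex_of_real ((cmod (z / complex_of_real r))\<^sup>2)"
    by (rule complex_norm_square[symmetric])
  then show ?thesis by (simp add: norm_divide power_divide)
qed


lemma value_eq:
  assumes "d \<le> n"
  shows "Re (ptrace_last n d (proj (magnon n s)) (replicate d True) (replicate d True))
    = (fact s)\<^sup>2 * FF n s {d..<n} / ((fact s)\<^sup>2 * FF n s {..<n})"
proof -
  let ?v = "(S_minus n ^^ s) (Psi n)"
  let ?r = "vnorm n ?v"
  have r2: "?r\<^sup>2 = (fact s)\<^sup>2 * FF n s {..<n}"
    unfolding vnorm_def denom_sum[symmetric] by (simp add: sum_nonneg)
  have "Re (ptrace_last n d (proj (magnon n s)) (replicate d True) (replicate d True))
      = (\<Sum>y\<in>basis (n - d). (cmod (?v (replicate d True @ y)))\<^sup>2 / ?r\<^sup>2)"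
    unfolding ptrace_last_def proj_def magnon_def Let_def Re_sum Re_proj ..
  also have "\<dots> = (\<Sum>y\<in>basis (n - d). (cmod (?v (replicate d True @ y)))\<^sup>2) / ?r\<^sup>2"
    by (simp add: sum_divide_distrib)
  also have "\<dots> = (fact s)\<^sup>2 * FF n s {d..<n} / ((fact s)\<^sup>2 * FF n s {..<n})"
    unfolding num_sum[OF assms] r2 ..
  finally show ?thesis .
qed

lemma main_bound:
  assumes n: "n \<ge> 4" and s: "1 \<le> s" "s \<le> n - 2" and d: "d \<le> n"
  shows "Re (ptrace_last n d (proj (magnon n s)) (replicate d True) (replicate d True))
      \<ge> 1 - 3 * real d * real s / real n"
proof -
  define M where "M = n - 2"
  define f2 :: real where "f2 = (fact s)\<^sup>2"
  have f2: "f2 > 0" unfolding f2_def by simp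
  have FFn: "FF n s {..<n} = real (n * (M choose s))"
    using FF_formula[of "{..<n}" n s n] Sw_all[of n] n s unfolding M_def by simp
  have Bpos: "real (M choose s) > 0" using s unfolding M_def by simp
  have nr: "real n \<ge> 4" using n by simp
  have Dpos: "f2 * FF n s {..<n} > 0" using FFn Bpos f2 n by simp
  have val: "Re (ptrace_last n d (proj (magnon n s)) (replicate d True) (replicate d True))
     = f2 * FF n s {d..<n} / (f2 * FF n s {..<n})"
    unfolding f2_def by (rule value_eq[OF d])
  have FFdnn: "FF n s {d..<n} \<ge> 0" unfolding FF_def by (simp add: sum_nonneg)
  show ?thesis
  proof (cases "real n \<le> 3 * real d * real s")
    case True
    then have "1 - 3 * real d * real s / real n \<le> 0" using nr by (simp add: field_simps)
    moreover have "f2 * FF n s {d..<n} / (f2 * FF n s {..<n}) \<ge> 0"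
      by (rule divide_nonneg_pos) (use FFdnn f2 Dpos in auto)
    ultimately show ?thesis using val by linarith
  next
    case False
    then have lt: "3 * real d * real s < real n" by simp
    have "real d * 1 \<le> real d * real s" using s by (intro mult_left_mono) auto
    then have "real d \<le> real d * real s" by simp
    then have d3: "3 * real d < real n" using lt by linarith
    then have dM: "d \<le> M" "n - d \<ge> 2" using n unfolding M_def by linarith+
    have card: "card {d..<n} = n - d" by simp
    have "FF n s {d..<n} = real (n - d - 2 choose (s - 1)) * (cmod (Sw n {d..<n}))\<^sup>2 + real ((n - d) * (n - d - 2 choose s))"
      by (rule FF_formula[OF _ card dM(2) s(1)]) simp
    moreover have "n - d - 2 = M - d" unfolding M_def by simp
    ultimately have FFd: "FF n s {d..<n} \<ge> real (n - d) * real (M - d choose s)"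
      by simp
    have Mpos: "M > 0" using n unfolding M_def by simp
    have br: "real (M - d choose s) \<ge> real (M choose s) * (1 - real d * real s / real M)"
      by (rule binom_ratio[OF s(1) dM(1) Mpos])
    have Mr: "real M = real n - 2" using n unfolding M_def by simp
    have q: "real d * real s / real M \<le> 2 * real d * real s / real n"
    proof -
      have "real n \<le> 2 * real M" using Mr nr by linarith
      then have h: "real d * real s * real n \<le> real d * real s * (2 * real M)" by (intro mult_left_mono) auto
      have "real d * real s / real M = real d * real s * real n / (real M * real n)" using nr by simp
      also have "\<dots> \<le> real d * real s * (2 * real M) / (real M * real n)"
        using h Mpos nr by (intro divide_right_mono) auto
      also have "\<dots> = 2 * real d * real s / real n" using Mpos by (simp add: field_simps)
      finally show ?thesis .
    qed
    let ?B = "real (M choose s)"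
    have nd: "real (n - d) = real n - real d" using d by simp
    have p1: "(real n - real d) * (1 - 2 * real d * real s / real n) \<ge> real n - 3 * real d * real s"
    proof -
      have "(real n - real d) * (1 - 2 * real d * real s / real n) = real n - real d - 2 * real d * real s + 2 * real d * real d * real s / real n"
        using nr by (simp add: field_simps)
      moreover have "2 * real d * real d * real s / real n \<ge> 0" by simp
      ultimately show ?thesis using \<open>real d \<le> real d * real s\<close> by linarith
    qed
    have "?B * (real n - 3 * real d * real s) \<le> ?B * ((real n - real d) * (1 - 2 * real d * real s / real n))"
      using Bpos p1 by (intro mult_left_mono) auto
    also have "\<dots> = real (n - d) * (?B * (1 - 2 * real d * real s / real n))"
      using nd by simp
    also have "\<dots> \<le> real (n - d) * (?B * (1 - real d * real s / real M))"
      using q Bpos by (intro mult_left_mono) auto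
    also have "\<dots> \<le> real (n - d) * real (M - d choose s)"
      by (rule mult_left_mono[OF br]) simp
    finally have key: "?B * (real n - 3 * real d * real s) \<le> real (n - d) * real (M - d choose s)" .
    have "(1 - 3 * real d * real s / real n) * (f2 * FF n s {..<n}) = f2 * (?B * (real n - 3 * real d * real s))"
      using FFn nr by (simp add: field_simps)
    also have "\<dots> \<le> f2 * FF n s {d..<n}"
      using key FFd f2 by (intro mult_left_mono) auto
    finally have "(1 - 3 * real d * real s / real n) * (f2 * FF n s {..<n}) \<le> f2 * FF n s {d..<n}" .
    then have "1 - 3 * real d * real s / real n \<le> f2 * FF n s {d..<n} / (f2 * FF n s {..<n})"
      by (rule pos_le_divide_eq[OF Dpos, THEN iffD2])
    then show ?thesis using val by simp
  qed
qed

theorem lemma21: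
  shows "\<exists>C::real. \<exists>N::nat. \<forall>n\<ge>N. \<forall>s\<in>{1..n-2}. \<forall>d\<le>n.
    Re (ptrace_last n d (proj (magnon n s)) (replicate d True) (replicate d True))
      \<ge> 1 - C * real d * real s / real n"
  using main_bound by (intro exI[of _ 3] exI[of _ 4]) auto

end
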